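(* Let $a_1\ge a_2\ge\dots\ge a_n\ge0$, let $\delta\in(2/n,1]$ be such that $1/\delta$ is an integer, and let $\delta_1,\dots,\delta_n$ be independent random variables with $\mathbb P(\delta_j=1)=\delta$, $\mathbb P(\delta_j=0)=1-\delta$. Put $n(\delta)=e+\sum_{j=1}^n\delta_j$. Then $$\frac{\delta}{4e}\sqrt{\log(\delta n)}\sum_{j=1}^{1/\delta}a_j\ \le\ \mathbb E\Bigl(\sqrt{\log n(\delta)}\cdot\max_{1\le j\le n}\delta_ja_j\Bigr)\ \le\ 4\delta\sqrt{\log(\delta n)}\sum_{j=1}^{1/\delta}a_j.$$
   Context: $\log$ is the natural logarithm and $e$ is Euler's number. *)

theory Defs
  imports "HOL-Probability.Probability"
begin

end

theory Submission
  imports Defs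
begin
lemma sqrt_am: assumes "y \<ge> 0" "t > 0" shows "sqrt y \<le> (y + t) / (2 * sqrt t)"
proof -
  have "0 \<le> (sqrt y - sqrt t)^2" by simp
  hence "2 * sqrt y * sqrt t \<le> y + t" using assms by (simp add: power2_eq_square algebra_simps)
  thus ?thesis using assms by (simp add: field_simps)
qed

lemma g_tangent:
  fixes s x :: real assumes "s \<ge> 0" "x \<ge> 0"
  shows "sqrt (ln (exp 1 + s)) \<le> sqrt (ln (exp 1 + x)) + (s - x) / (2 * sqrt (ln (exp 1 + x)) * (exp 1 + x))"
proof -
  define t where "t = ln (exp 1 + x)"
  have e0: "exp 1 > (0::real)" by simp
  have t1: "t \<ge> 1" unfolding t_def using assms
    by (subst ln_ge_iff) (use assms e0 in \<open>auto intro: add_pos_nonneg\<close>)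
  have p1: "exp 1 + s > 0" "exp 1 + x > 0" using assms by (simp_all add: add_pos_nonneg)
  have "ln (exp 1 + s) - t = ln ((exp 1 + s) / (exp 1 + x))" unfolding t_def
    using p1 by (simp add: ln_div)
  also have "\<dots> \<le> (exp 1 + s) / (exp 1 + x) - 1"
    by (rule ln_le_minus_one) (use assms in \<open>simp add: add_pos_nonneg\<close>)
  also have "\<dots> = (s - x) / (exp 1 + x)"
  proof -
    have "exp 1 + x > 0" using assms by (simp add: add_pos_nonneg)
    thus ?thesis by (simp add: field_simps)
  qed
  finally have L: "ln (exp 1 + s) \<le> t + (s - x) / (exp 1 + x)" by simp
  have ln0: "ln (exp 1 + s) \<ge> 0" using assms
    by (simp add: add_increasing2 ln_ge_zero one_le_exp_iff)
  have "sqrt (ln (exp 1 + s)) \<le> (ln (exp 1 + s) + t) / (2 * sqrt t)"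
    by (rule sqrt_am) (use ln0 t1 in auto)
  also have "\<dots> \<le> (2 * t + (s - x) / (exp 1 + x)) / (2 * sqrt t)"
    using L t1 by (intro divide_right_mono) auto
  also have "\<dots> = sqrt t + (s - x) / (2 * sqrt t * (exp 1 + x))"
  proof -
    have "(2 * t + (s - x) / (exp 1 + x)) / (2 * sqrt t) = t / sqrt t + (s - x) / (exp 1 + x) / (2 * sqrt t)"
      by (simp add: add_divide_distrib)
    also have "t / sqrt t = sqrt t" using t1 by (simp add: real_div_sqrt)
    also have "(s - x) / (exp 1 + x) / (2 * sqrt t) = (s - x) / (2 * sqrt t * (exp 1 + x))"
      by (simp add: mult.commute)
    finally show ?thesis .
  qed
  finally show ?thesis unfolding t_def .
qed

lemma ln2_half: "ln (2::real) \<ge> 1/2"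
proof -
  have "ln (1/2::real) \<le> 1/2 - 1" by (rule ln_le_minus_one) simp
  moreover have "ln (1/2::real) = - ln 2" by (simp add: ln_div)
  ultimately show ?thesis by simp
qed

lemma final_up:
  fixes x :: real assumes "x > 2"
  shows "2 * sqrt (ln (exp 1 + x)) + 1 / (2 * sqrt (ln (exp 1 + x)) * (exp 1 + x)) \<le> 4 * sqrt (ln x)"
proof -
  have e3: "exp 1 \<le> (3::real)" using exp_le by simp
  have "exp 1 + x \<le> x ^ 3"
  proof -
    have "x * x \<ge> 2 * 2" using assms by (intro mult_mono) auto
    hence h: "x * x * x \<ge> 4 * x" using assms by (intro mult_right_mono) auto
    have "x ^ 3 = x * x * x" by (simp add: power3_eq_cube)
    with h assms e3 show ?thesis by linarith
  qed
  hence "ln (exp 1 + x) \<le> ln (x ^ 3)" using assms by (simp add: add_pos_pos)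
  also have "\<dots> = 3 * ln x" using assms by (simp add: ln_realpow)
  finally have l3: "ln (exp 1 + x) \<le> 3 * ln x" .
  have lx: "ln x \<ge> 1/2" proof -
    have "ln 2 \<le> ln x" using assms by simp
    thus ?thesis using ln2_half by linarith
  qed
  have t1: "ln (exp 1 + x) \<ge> 1" using assms
  proof -
    have "exp 1 + x > 0" using assms by (simp add: add_pos_pos)
    thus ?thesis by (subst ln_ge_iff) (use assms in auto)
  qed
  have "sqrt (ln (exp 1 + x)) \<le> sqrt 3 * sqrt (ln x)" using l3 by (simp flip: real_sqrt_mult)
  moreover have "sqrt 3 \<le> (7/4::real)" by (rule real_le_lsqrt) (simp_all add: power2_eq_square)
  moreover have "sqrt (ln x) \<ge> sqrt (1/2)" using lx by simp
  moreover have "sqrt (1/2) \<ge> (7/10::real)" by (rule real_le_rsqrt) (simp_all add: power2_eq_square)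
  moreover have "1 / (2 * sqrt (ln (exp 1 + x)) * (exp 1 + x)) \<le> 1/4"
  proof -
    have "sqrt (ln (exp 1 + x)) \<ge> 1" using t1 by simp
    moreover have "exp 1 + x \<ge> 2" using assms exp_ge_zero[of 1] by linarith
    ultimately have "2 * sqrt (ln (exp 1 + x)) * (exp 1 + x) \<ge> 2 * 1 * 2" by (intro mult_mono) auto
    thus ?thesis by (simp add: divide_simps)
  qed
  ultimately show ?thesis
  proof -
    assume h1: "sqrt (ln (exp 1 + x)) \<le> sqrt 3 * sqrt (ln x)" and h2: "sqrt 3 \<le> 7/4"
      and h3: "sqrt (ln x) \<ge> sqrt (1/2)" and h4: "sqrt (1/2) \<ge> 7/10"
      and h5: "1 / (2 * sqrt (ln (exp 1 + x)) * (exp 1 + x)) \<le> 1/4"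
    have "sqrt 3 * sqrt (ln x) \<le> 7/4 * sqrt (ln x)" using h2 lx by (intro mult_right_mono) auto
    thus ?thesis using h1 h3 h4 h5 by linarith
  qed
qed

lemma (in finite_measure) intb:
  fixes f :: "'a \<Rightarrow> real"
  assumes "f \<in> borel_measurable M" "\<And>x. x \<in> space M \<Longrightarrow> \<bar>f x\<bar> \<le> B"
  shows "integrable M f"
  by (rule integrable_const_bound[where B=B]) (use assms in auto)

locale bern = prob_space +
  fixes Y :: "nat \<Rightarrow> 'a \<Rightarrow> real" and n :: nat and \<delta> :: real
  assumes Y01: "\<And>j x. Y j x = 0 \<or> Y j x = 1"
    and Ym[measurable]: "\<And>j. Y j \<in> borel_measurable M"
    and ind: "indep_vars (\<lambda>_. borel) Y {1..n}"
    and EY: "\<And>j. j \<in> {1..n} \<Longrightarrow> expectation (Y j) = \<delta>"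
begin

lemma Y_ge0[simp]: "Y j x \<ge> 0" using Y01[of j x] by auto
lemma Y_le1[simp]: "Y j x \<le> 1" using Y01[of j x] by auto
lemma Y_sq[simp]: "Y j x * Y j x = Y j x" using Y01[of j x] by auto

lemma intY[simp]: "integrable M (Y j)"
  by (rule intb[where B=1]) auto

lemma intYY[simp]: "integrable M (\<lambda>x. Y i x * Y j x)"
  by (rule intb[where B=1]) (auto simp: abs_mult intro!: mult_le_one)

lemma E_pair:
  assumes "i \<in> {1..n}" "l \<in> {1..n}"
  shows "expectation (\<lambda>x. Y i x * Y l x) = (if i = l then \<delta> else \<delta>^2)"
proof (cases "i = l")
  case True thus ?thesis using EY assms by simp
next
  case False
  have "expectation (\<lambda>x. \<Prod>m\<in>{i,l}. Y m x) = (\<Prod>m\<in>{i,l}. expectation (Y m))"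
    by (rule indep_vars_lebesgue_integral) (use assms in \<open>auto intro: indep_vars_subset[OF ind]\<close>)
  thus ?thesis using False assms EY by (simp add: power2_eq_square)
qed

definition I :: "nat \<Rightarrow> 'a \<Rightarrow> real" where
  "I j x = Y j x * (\<Prod>i\<in>{1..<j}. 1 - Y i x)"

lemma I_ge0[simp]: "I j x \<ge> 0" unfolding I_def by (intro mult_nonneg_nonneg prod_nonneg) auto
lemma I_le1[simp]: "I j x \<le> 1" unfolding I_def by (auto intro!: mult_le_one prod_nonneg prod_le_1)

lemma I_meas[measurable]: "I j \<in> borel_measurable M"
  unfolding I_def[abs_def] by measurable

lemma E_I:
  assumes "j \<in> {1..n}"
  shows "expectation (I j) = \<delta> * (1 - \<delta>) ^ (j - 1)"
proof -
  define Z where "Z m x = (if m = j then Y m x else 1 - Y m x)" for m x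
  have indZ: "indep_vars (\<lambda>_. borel) (\<lambda>m x. (\<lambda>v. if m = j then v else 1 - v) (Y m x)) {1..j}"
    by (rule indep_vars_compose2[OF indep_vars_subset[OF ind]]) (use assms in auto)
  have Zi: "integrable M (Z m)" for m
    unfolding Z_def by (cases "m = j") auto
  have "expectation (\<lambda>x. \<Prod>m\<in>{1..j}. Z m x) = (\<Prod>m\<in>{1..j}. expectation (Z m))"
  proof (rule indep_vars_lebesgue_integral)
    show "indep_vars (\<lambda>_. borel) Z {1..j}" using indZ unfolding Z_def .
  qed (use Zi in auto)
  moreover have "(\<lambda>x. \<Prod>m\<in>{1..j}. Z m x) = I j"
  proof
    fix x
    have e: "{1..j} = insert j {1..<j}" using assms by auto
    show "(\<Prod>m\<in>{1..j}. Z m x) = I j x"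
    proof -
      have "(\<Prod>m\<in>{1..<j}. Z m x) = (\<Prod>m\<in>{1..<j}. 1 - Y m x)"
        by (rule prod.cong) (auto simp: Z_def)
      thus ?thesis unfolding e I_def by (simp add: Z_def)
    qed
  qed
  moreover have "(\<Prod>m\<in>{1..j}. expectation (Z m)) = \<delta> * (1 - \<delta>) ^ (j - 1)"
  proof -
    have e: "{1..j} = insert j {1..<j}" using assms by auto
    have "(\<Prod>m\<in>{1..<j}. expectation (Z m)) = (\<Prod>m\<in>{1..<j}. 1 - \<delta>)"
    proof (rule prod.cong)
      fix m assume m: "m \<in> {1..<j}"
      hence "Z m = (\<lambda>x. 1 - Y m x)" by (auto simp: Z_def)
      thus "expectation (Z m) = 1 - \<delta>" using m assms EY[of m] by (simp add: integral_diff prob_space)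
    qed simp
    moreover have "Z j = Y j" by (auto simp: Z_def)
    ultimately show ?thesis unfolding e using assms EY by simp
  qed
  ultimately show ?thesis by simp
qed

end

context bern begin

lemma intI[simp]: "integrable M (I j)"
  by (rule intb[where B=1]) auto

lemma E_group:
  fixes a :: "nat \<Rightarrow> real"
  assumes "1 \<le> k" "k < n"
  shows "expectation (\<lambda>x. (\<Sum>j=1..k. a j * I j x) * sqrt (ln (exp 1 + (\<Sum>i=k+1..n. Y i x))))
       = expectation (\<lambda>x. \<Sum>j=1..k. a j * I j x) * expectation (\<lambda>x. sqrt (ln (exp 1 + (\<Sum>i=k+1..n. Y i x))))"
proof -
  have iv: "indep_var (PiM {1..k} (\<lambda>_. borel)) (\<lambda>\<omega>. restrict (\<lambda>i. Y i \<omega>) {1..k})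
                      (PiM {k+1..n} (\<lambda>_. borel)) (\<lambda>\<omega>. restrict (\<lambda>i. Y i \<omega>) {k+1..n})"
    by (rule indep_var_restrict[OF ind]) (use assms in auto)
  define FF :: "(nat \<Rightarrow> real) \<Rightarrow> real" where "FF \<omega> = (\<Sum>j=1..k. a j * (\<omega> j * (\<Prod>i\<in>{1..<j}. 1 - \<omega> i)))" for \<omega>
  define GG :: "(nat \<Rightarrow> real) \<Rightarrow> real" where "GG \<omega> = sqrt (ln (exp 1 + (\<Sum>i=k+1..n. \<omega> i)))" for \<omega>
  have mF: "FF \<in> borel_measurable (PiM {1..k} (\<lambda>_. borel))"
    unfolding FF_def
    by (intro borel_measurable_sum borel_measurable_times borel_measurable_prod borel_measurable_const
          borel_measurable_diff measurable_component_singleton) auto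
  have mG: "GG \<in> borel_measurable (PiM {k+1..n} (\<lambda>_. borel))"
  proof -
    have "(\<lambda>\<omega>::nat\<Rightarrow>real. \<Sum>i\<in>{k+1..n}. \<omega> i) \<in> borel_measurable (PiM {k+1..n} (\<lambda>_. borel))"
      by (rule borel_measurable_sum) (rule measurable_component_singleton, auto)
    hence "(\<lambda>\<omega>::nat\<Rightarrow>real. sqrt (ln (exp 1 + (\<Sum>i\<in>{k+1..n}. \<omega> i)))) \<in> borel_measurable (PiM {k+1..n} (\<lambda>_. borel))"
      by measurable
    thus ?thesis unfolding GG_def .
  qed
  have iv2: "indep_var borel (FF \<circ> (\<lambda>\<omega>. restrict (\<lambda>i. Y i \<omega>) {1..k})) borel (GG \<circ> (\<lambda>\<omega>. restrict (\<lambda>i. Y i \<omega>) {k+1..n}))"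
    by (rule indep_var_compose[OF iv mF mG])
  have eF: "FF \<circ> (\<lambda>\<omega>. restrict (\<lambda>i. Y i \<omega>) {1..k}) = (\<lambda>x. \<Sum>j=1..k. a j * I j x)"
  proof
    fix x show "(FF \<circ> (\<lambda>\<omega>. restrict (\<lambda>i. Y i \<omega>) {1..k})) x = (\<Sum>j=1..k. a j * I j x)"
      unfolding FF_def I_def comp_def
      by (intro sum.cong refl arg_cong2[where f="(*)"] prod.cong) auto
  qed
  have eG: "GG \<circ> (\<lambda>\<omega>. restrict (\<lambda>i. Y i \<omega>) {k+1..n}) = (\<lambda>x. sqrt (ln (exp 1 + (\<Sum>i=k+1..n. Y i x))))"
  proof
    fix x show "(GG \<circ> (\<lambda>\<omega>. restrict (\<lambda>i. Y i \<omega>) {k+1..n})) x = sqrt (ln (exp 1 + (\<Sum>i=k+1..n. Y i x)))"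
      unfolding GG_def comp_def
      by (intro arg_cong[where f="\<lambda>t. sqrt (ln (exp 1 + t))"] sum.cong) auto
  qed
  have intF: "integrable M (\<lambda>x. \<Sum>j=1..k. a j * I j x)" by auto
  have intG: "integrable M (\<lambda>x. sqrt (ln (exp 1 + (\<Sum>i=k+1..n. Y i x))))"
  proof (rule intb[where B="sqrt (ln (exp 1 + real n))"])
    fix x
    have "(\<Sum>i=k+1..n. Y i x) \<le> (\<Sum>i=k+1..n. 1)" by (intro sum_mono) auto
    also have "\<dots> \<le> real n" by simp
    finally have s: "(\<Sum>i=k+1..n. Y i x) \<le> real n" .
    have s0: "(\<Sum>i=k+1..n. Y i x) \<ge> 0" by (intro sum_nonneg) auto
    have "ln (exp 1 + (\<Sum>i=k+1..n. Y i x)) \<le> ln (exp 1 + real n)"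
      using s s0 by (subst ln_le_cancel_iff) (auto intro: add_pos_nonneg)
    moreover have "ln (exp 1 + (\<Sum>i=k+1..n. Y i x)) \<ge> 0" using s0
      by (simp add: add_increasing2 one_le_exp_iff)
    ultimately show "\<bar>sqrt (ln (exp 1 + (\<Sum>i=k+1..n. Y i x)))\<bar> \<le> sqrt (ln (exp 1 + real n))" by simp
  qed measurable
  show ?thesis
    using indep_var_lebesgue_integral[OF iv2] intF intG unfolding eF eG by simp
qed


lemma Max_ge0:
  fixes a :: "nat \<Rightarrow> real"
  assumes "n \<ge> 1" "\<And>j. j \<in> {1..n} \<Longrightarrow> a j \<ge> 0"
  shows "Max ((\<lambda>j. Y j x * a j) ` {1..n}) \<ge> 0"
proof -
  have "Y 1 x * a 1 \<le> Max ((\<lambda>j. Y j x * a j) ` {1..n})" by (rule Max_ge) (use assms in auto)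
  moreover have "Y 1 x * a 1 \<ge> 0" using assms by simp
  ultimately show ?thesis by linarith
qed

lemma Max_le_N:
  fixes a :: "nat \<Rightarrow> real"
  assumes "\<And>i j. 1 \<le> i \<Longrightarrow> i \<le> j \<Longrightarrow> j \<le> n \<Longrightarrow> a j \<le> a i"
    and "\<And>j. j \<in> {1..n} \<Longrightarrow> a j \<ge> 0" and "k + 1 \<le> n"
  shows "Max ((\<lambda>j. Y j x * a j) ` {1..n}) \<le> (\<Sum>j=1..k. Y j x * a j) + a (k+1)"
proof (rule Max.boundedI)
  show "finite ((\<lambda>j. Y j x * a j) ` {1..n})" by simp
  show "(\<lambda>j. Y j x * a j) ` {1..n} \<noteq> {}" using assms by auto
  fix t assume "t \<in> (\<lambda>j. Y j x * a j) ` {1..n}"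
  then obtain j where j: "j \<in> {1..n}" "t = Y j x * a j" by auto
  have ak: "a (k+1) \<ge> 0" using assms by auto
  have s0: "(\<Sum>j=1..k. Y j x * a j) \<ge> 0" using assms by (intro sum_nonneg) auto
  show "t \<le> (\<Sum>j=1..k. Y j x * a j) + a (k+1)"
  proof (cases "j \<le> k")
    case True
    have "Y j x * a j \<le> (\<Sum>j=1..k. Y j x * a j)"
      by (rule member_le_sum) (use True j assms in auto)
    thus ?thesis using j ak by simp
  next
    case False
    have "Y j x * a j \<le> a j" using j assms Y_le1[of j x] by (simp add: mult_left_le_one_le)
    also have "a j \<le> a (k+1)" using False j by (intro assms(1)) auto
    finally show ?thesis using j s0 by simp
  qed
qed

lemma W_le_Max:
  fixes a :: "nat \<Rightarrow> real"
  assumes "\<And>j. j \<in> {1..n} \<Longrightarrow> a j \<ge> 0" and "1 \<le> k" "k \<le> n"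
  shows "(\<Sum>j=1..k. a j * I j x) \<le> Max ((\<lambda>j. Y j x * a j) ` {1..n})"
proof (cases "\<exists>j\<in>{1..k}. Y j x = 1")
  case True
  define T where "T = {j\<in>{1..k}. Y j x = 1}"
  define j0 where "j0 = Min T"
  have fT: "finite T" "T \<noteq> {}" using True by (auto simp: T_def)
  have j0T: "j0 \<in> T" unfolding j0_def using fT by (rule Min_in)
  have j0le: "\<And>j. j \<in> T \<Longrightarrow> j0 \<le> j" unfolding j0_def using fT by simp
  have Ieq: "I j x = (if j = j0 then 1 else 0)" if j: "j \<in> {1..k}" for j
  proof -
    have small: "Y i x = 0" if "i \<in> {1..<j0}" for i
    proof -
      have "i \<notin> T" using j0le that by force
      hence "Y i x \<noteq> 1" using that j0T by (auto simp: T_def)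
      thus ?thesis using Y01[of i x] by auto
    qed
    consider "j = j0" | "j < j0" | "j > j0" by linarith
    thus ?thesis
    proof cases
      case 1
      have "(\<Prod>i\<in>{1..<j}. 1 - Y i x) = (\<Prod>i\<in>{1..<j}. 1)"
        by (rule prod.cong) (use small 1 in auto)
      thus ?thesis using 1 j0T by (simp add: I_def T_def)
    next
      case 2
      hence "Y j x = 0" using small j by auto
      thus ?thesis using 2 by (simp add: I_def)
    next
      case 3
      have "(\<Prod>i\<in>{1..<j}. 1 - Y i x) = 0"
        by (rule prod_zero) (use 3 j0T in \<open>auto simp: T_def intro!: bexI[of _ j0]\<close>)
      thus ?thesis using 3 by (simp add: I_def)
    qed
  qed
  have "(\<Sum>j=1..k. a j * I j x) = (\<Sum>j=1..k. if j = j0 then a j else 0)"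
    by (rule sum.cong) (auto simp: Ieq)
  also have "\<dots> = a j0" using j0T by (simp add: T_def)
  also have "\<dots> = Y j0 x * a j0" using j0T by (simp add: T_def)
  also have "\<dots> \<le> Max ((\<lambda>j. Y j x * a j) ` {1..n})"
  proof (rule Max_ge)
    have "j0 \<in> {1..n}" using j0T assms by (auto simp: T_def)
    thus "Y j0 x * a j0 \<in> (\<lambda>j. Y j x * a j) ` {1..n}" by blast
  qed simp
  finally show ?thesis .
next
  case False
  have "I j x = 0" if "j \<in> {1..k}" for j
    using False that Y01[of j x] by (auto simp: I_def)
  hence "(\<Sum>j=1..k. a j * I j x) = 0" by simp
  thus ?thesis using Max_ge0[of a x] assms by simp
qed


end

context bern begin
lemma sum_pair_le:
  assumes "j \<in> {1..n}" "B \<subseteq> {1..n}"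
  shows "(\<Sum>i\<in>B. expectation (\<lambda>x. Y i x * Y j x)) \<le> \<delta> + real (card B) * \<delta>^2"
proof -
  have "(\<Sum>i\<in>B. expectation (\<lambda>x. Y i x * Y j x)) = (\<Sum>i\<in>B. \<delta>^2 + (if i = j then \<delta> - \<delta>^2 else 0))"
  proof (rule sum.cong)
    fix i assume "i \<in> B"
    hence i: "i \<in> {1..n}" using assms by auto
    show "expectation (\<lambda>x. Y i x * Y j x) = \<delta>^2 + (if i = j then \<delta> - \<delta>^2 else 0)"
      using E_pair[OF i assms(1)] by simp
  qed simp
  also have "\<dots> = real (card B) * \<delta>^2 + (if j \<in> B then \<delta> - \<delta>^2 else 0)"
  proof -
    have fB: "finite B" using assms(2) finite_subset by blast
    thus ?thesis by (simp add: sum.distrib)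
  qed
  also have "\<dots> \<le> \<delta> + real (card B) * \<delta>^2"
  proof -
    have "0 \<le> expectation (Y j)" by (rule Bochner_Integration.integral_nonneg) simp
    hence "\<delta> \<ge> 0" using EY[OF assms(1)] by simp
    thus ?thesis by (auto simp: power2_eq_square)
  qed
  finally show ?thesis .
qed

lemma upper:
  fixes a :: "nat \<Rightarrow> real" and k :: nat
  assumes amono: "\<And>i j. 1 \<le> i \<Longrightarrow> i \<le> j \<Longrightarrow> j \<le> n \<Longrightarrow> a j \<le> a i"
    and anon: "\<And>j. j \<in> {1..n} \<Longrightarrow> a j \<ge> 0"
    and k: "1 \<le> k" "k + 1 \<le> n" and dk: "\<delta> * real k = 1" and dn: "\<delta> * real n > 2"
  shows "integrable M (\<lambda>x. sqrt (ln (exp 1 + (\<Sum>j=1..n. Y j x))) * Max ((\<lambda>j. Y j x * a j) ` {1..n}))"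
    and "expectation (\<lambda>x. sqrt (ln (exp 1 + (\<Sum>j=1..n. Y j x))) * Max ((\<lambda>j. Y j x * a j) ` {1..n}))
          \<le> 4 * \<delta> * sqrt (ln (\<delta> * real n)) * (\<Sum>j=1..k. a j)"
proof -
  define x0 where "x0 = \<delta> * real n"
  define st where "st = sqrt (ln (exp 1 + x0))"
  define \<beta> where "\<beta> = 1 / (2 * st * (exp 1 + x0))"
  define \<alpha> where "\<alpha> = st - x0 * \<beta>"
  define A where "A = (\<Sum>j=1..k. a j)"
  define T where "T x = sqrt (ln (exp 1 + (\<Sum>j=1..n. Y j x))) * Max ((\<lambda>j. Y j x * a j) ` {1..n})" for x
  define S where "S x = (\<Sum>i=1..n. Y i x)" for x
  define N where "N x = (\<Sum>j=1..k. Y j x * a j) + a (k+1)" for x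
  define U where "U x = \<alpha> * N x + \<beta> * ((\<Sum>j=1..k. a j * (\<Sum>i=1..n. Y i x * Y j x)) + a (k+1) * S x)" for x
  have d0: "\<delta> > 0"
  proof -
    have "real k > 0" using k by simp
    moreover have "0 < \<delta> * real k" using dk by simp
    ultimately show ?thesis by (auto simp: zero_less_mult_iff)
  qed
  have x0: "x0 > 2" using dn by (simp add: x0_def)
  have e0: "exp 1 + x0 > 0" using x0 exp_gt_zero[of 1] by linarith
  have lt1: "ln (exp 1 + x0) \<ge> 1" using x0
    by (subst ln_ge_iff) (use e0 in auto)
  have st1: "st \<ge> 1" using lt1 by (simp add: st_def)
  have b0: "\<beta> \<ge> 0" using st1 e0 by (simp add: \<beta>_def)
  have xb: "x0 * \<beta> \<le> 1/2"
  proof -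
    have "x0 * \<beta> = (x0 / (exp 1 + x0)) * (1 / (2 * st))" by (simp add: \<beta>_def)
    also have "\<dots> \<le> 1 * (1/2)"
    proof (rule mult_mono)
      show "x0 / (exp 1 + x0) \<le> 1" using e0 by (simp add: divide_simps)
      show "1 / (2 * st) \<le> 1/2" using st1 by (simp add: divide_simps)
    qed (use st1 in auto)
    finally show ?thesis by simp
  qed
  have a0: "\<alpha> \<ge> 0" using xb st1 by (simp add: \<alpha>_def)
  have S0: "S x \<ge> 0" for x by (simp add: S_def sum_nonneg)
  have g_le: "sqrt (ln (exp 1 + S x)) \<le> \<alpha> + \<beta> * S x" for x
  proof -
    have "sqrt (ln (exp 1 + S x)) \<le> st + (S x - x0) / (2 * st * (exp 1 + x0))"
      unfolding st_def by (rule g_tangent) (use S0 x0 in auto)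
    also have "(S x - x0) / (2 * st * (exp 1 + x0)) = (S x - x0) * \<beta>" by (simp add: \<beta>_def)
    also have "st + (S x - x0) * \<beta> = \<alpha> + \<beta> * S x" by (simp add: \<alpha>_def algebra_simps)
    finally show ?thesis .
  qed
  have TU: "T x \<le> U x" for x
  proof -
    have g0: "sqrt (ln (exp 1 + S x)) \<ge> 0" using S0[of x] by (simp add: add_increasing2 one_le_exp_iff)
    have M0: "Max ((\<lambda>j. Y j x * a j) ` {1..n}) \<ge> 0" using Max_ge0[of a x] k anon by simp
    have MN: "Max ((\<lambda>j. Y j x * a j) ` {1..n}) \<le> N x" unfolding N_def using Max_le_N[OF amono anon k(2)] by simp
    have "T x = sqrt (ln (exp 1 + S x)) * Max ((\<lambda>j. Y j x * a j) ` {1..n})" by (simp add: T_def S_def)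
    also have "\<dots> \<le> (\<alpha> + \<beta> * S x) * N x"
    proof -
      have "0 \<le> \<alpha> + \<beta> * S x" using g0 g_le[of x] by linarith
      thus ?thesis by (rule mult_mono[OF g_le MN _ M0])
    qed
    also have "\<dots> = U x"
    proof -
      have "S x * (\<Sum>j=1..k. Y j x * a j) = (\<Sum>j=1..k. a j * (S x * Y j x))"
        by (simp add: sum_distrib_left mult_ac)
      also have "\<dots> = (\<Sum>j=1..k. a j * (\<Sum>i=1..n. Y i x * Y j x))"
        by (simp add: S_def sum_distrib_right)
      finally have e1: "S x * (\<Sum>j=1..k. Y j x * a j) = (\<Sum>j=1..k. a j * (\<Sum>i=1..n. Y i x * Y j x))" .
      have e2: "(\<alpha> + \<beta> * S x) * N x = \<alpha> * N x + \<beta> * (S x * (\<Sum>j=1..k. Y j x * a j) + a (k+1) * S x)"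
        unfolding N_def by (simp add: algebra_simps)
      show ?thesis unfolding e2 e1 U_def ..
    qed
    finally show ?thesis .
  qed
  have intU: "integrable M U" unfolding U_def N_def S_def by auto
  have mT: "T \<in> borel_measurable M" unfolding T_def by measurable
  have intT: "integrable M T"
  proof (rule Bochner_Integration.integrable_bound[OF intU mT])
    show "AE x in M. norm (T x) \<le> norm (U x)"
    proof (rule AE_I2)
      fix x
      have "T x \<ge> 0" unfolding T_def using Max_ge0[of a x] k anon
        by (intro mult_nonneg_nonneg) (auto simp: add_increasing2 one_le_exp_iff sum_nonneg)
      thus "norm (T x) \<le> norm (U x)" using TU[of x] by simp
    qed
  qed
  thus "integrable M (\<lambda>x. sqrt (ln (exp 1 + (\<Sum>j=1..n. Y j x))) * Max ((\<lambda>j. Y j x * a j) ` {1..n}))"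
    unfolding T_def .
  have "expectation T \<le> expectation U" by (rule integral_mono[OF intT intU TU])
  also have "expectation U = \<alpha> * ((\<Sum>j=1..k. expectation (Y j) * a j) + a (k+1))
       + \<beta> * ((\<Sum>j=1..k. a j * (\<Sum>i=1..n. expectation (\<lambda>x. Y i x * Y j x))) + a (k+1) * (\<Sum>i=1..n. expectation (Y i)))"
    unfolding U_def N_def S_def by (simp add: integral_sum prob_space)
  also have "\<dots> \<le> \<alpha> * (\<delta> * A + a (k+1)) + \<beta> * (A * (\<delta> + real n * \<delta>^2) + a (k+1) * (real n * \<delta>))"
  proof -
    have 1: "(\<Sum>j=1..k. expectation (Y j) * a j) = \<delta> * A"
      unfolding A_def sum_distrib_left by (rule sum.cong) (use k EY in auto)
    have 2: "(\<Sum>i=1..n. expectation (Y i)) = real n * \<delta>" using EY by simp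
    have 3: "(\<Sum>j=1..k. a j * (\<Sum>i=1..n. expectation (\<lambda>x. Y i x * Y j x))) \<le> (\<Sum>j=1..k. a j * (\<delta> + real n * \<delta>^2))"
    proof (rule sum_mono)
      fix j assume j: "j \<in> {1..k}"
      show "a j * (\<Sum>i=1..n. expectation (\<lambda>x. Y i x * Y j x)) \<le> a j * (\<delta> + real n * \<delta>^2)"
        using sum_pair_le[of j "{1..n}"] j k anon[of j] by (intro mult_left_mono) auto
    qed
    have 4: "(\<Sum>j=1..k. a j * (\<delta> + real n * \<delta>^2)) = A * (\<delta> + real n * \<delta>^2)"
      by (simp add: A_def sum_distrib_right)
    show ?thesis using 1 2 3 4 b0 by (simp add: mult_left_mono)
  qed
  also have "\<dots> \<le> \<alpha> * (2 * \<delta> * A) + \<beta> * (\<delta> * A * (1 + 2 * x0))"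
  proof -
    have "real k * a (k+1) \<le> A"
    proof -
      have "(\<Sum>j=1..k. a (k+1)) \<le> A" unfolding A_def by (rule sum_mono) (use k in \<open>auto intro!: amono\<close>)
      thus ?thesis by simp
    qed
    hence "\<delta> * (real k * a (k+1)) \<le> \<delta> * A" using d0 by (intro mult_left_mono) auto
    hence ak: "a (k+1) \<le> \<delta> * A" using dk by (simp add: mult.assoc[symmetric])
    have "\<alpha> * (\<delta> * A + a (k+1)) \<le> \<alpha> * (2 * \<delta> * A)" using ak a0 by (intro mult_left_mono) (auto simp: mult.commute)
    moreover have "\<beta> * (A * (\<delta> + real n * \<delta>^2) + a (k+1) * (real n * \<delta>)) \<le> \<beta> * (\<delta> * A * (1 + 2 * x0))"
    proof (rule mult_left_mono[OF _ b0])
      have "a (k+1) * (real n * \<delta>) \<le> \<delta> * A * (real n * \<delta>)" using ak d0 by (intro mult_right_mono) auto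
      thus "A * (\<delta> + real n * \<delta>^2) + a (k+1) * (real n * \<delta>) \<le> \<delta> * A * (1 + 2 * x0)"
        by (simp add: x0_def power2_eq_square algebra_simps)
    qed
    ultimately show ?thesis by linarith
  qed
  also have "\<dots> = \<delta> * A * (2 * st + \<beta>)" by (simp add: \<alpha>_def algebra_simps)
  also have "\<dots> \<le> \<delta> * A * (4 * sqrt (ln x0))"
  proof (rule mult_left_mono)
    show "2 * st + \<beta> \<le> 4 * sqrt (ln x0)" using final_up[OF x0] by (simp add: st_def \<beta>_def)
    have "A \<ge> 0" unfolding A_def by (rule sum_nonneg) (use anon k in auto)
    thus "0 \<le> \<delta> * A" using d0 by simp
  qed
  finally have fin: "expectation T \<le> \<delta> * A * (4 * sqrt (ln x0))" .
  have eq: "\<delta> * A * (4 * sqrt (ln x0)) = 4 * \<delta> * sqrt (ln (\<delta> * real n)) * (\<Sum>j=1..k. a j)"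
    unfolding x0_def A_def by (simp only: mult_ac)
  have eqT: "T = (\<lambda>x. sqrt (ln (exp 1 + (\<Sum>j=1..n. Y j x))) * Max ((\<lambda>j. Y j x * a j) ` {1..n}))"
    by (rule ext) (simp only: T_def)
  show "expectation (\<lambda>x. sqrt (ln (exp 1 + (\<Sum>j=1..n. Y j x))) * Max ((\<lambda>j. Y j x * a j) ` {1..n}))
          \<le> 4 * \<delta> * sqrt (ln (\<delta> * real n)) * (\<Sum>j=1..k. a j)"
    using fin unfolding eq eqT .
qed

end

lemma pow_exp_bound:
  fixes \<delta> :: real and k :: nat
  assumes "1 \<le> k" "\<delta> * real k = 1"
  shows "(1 - \<delta>) ^ (k - 1) \<ge> exp (-1)"
proof (cases "k = 1")
  case True thus ?thesis by simp
next
  case False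
  hence k2: "k \<ge> 2" using assms by simp
  have d: "\<delta> = 1 / real k" using assms by (simp add: field_simps)
  have dpos: "\<delta> > 0" and dle: "\<delta> \<le> 1/2" using k2 by (auto simp: d divide_simps)
  define q where "q = 1 - \<delta>"
  have q0: "q > 0" using dle by (simp add: q_def)
  have "1 / q = 1 + \<delta> / q" using q0 by (simp add: q_def field_simps)
  also have "\<dots> \<le> exp (\<delta> / q)" using exp_ge_add_one_self[of "\<delta> / q"] by (simp add: add.commute)
  finally have h: "1 / q \<le> exp (\<delta> / q)" .
  have "(1 / q) ^ (k - 1) \<le> exp (\<delta> / q) ^ (k - 1)" by (rule power_mono[OF h]) (use q0 in simp)
  also have "\<dots> = exp (real (k - 1) * (\<delta> / q))" by (rule exp_of_nat_mult[symmetric])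
  also have "real (k - 1) * (\<delta> / q) = 1"
  proof -
    have "real (k - 1) * \<delta> = q" using assms k2 by (simp add: of_nat_diff q_def algebra_simps)
    hence "real (k - 1) * (\<delta> / q) = q / q" by (simp add: times_divide_eq_right[symmetric])
    also have "q / q = 1" using q0 by simp
    finally show ?thesis .
  qed
  finally have "(1 / q) ^ (k - 1) \<le> exp 1" by simp
  hence "1 / q ^ (k - 1) \<le> exp 1" by (simp add: power_one_over)
  hence "1 \<le> exp 1 * q ^ (k - 1)" using q0 by (simp add: divide_simps)
  hence "exp (-1) \<le> q ^ (k - 1)" by (simp add: exp_minus field_simps)
  thus ?thesis by (simp add: q_def)
qed

context bern begin

lemma intG:
  "integrable M (\<lambda>x. sqrt (ln (exp 1 + (\<Sum>i\<in>B. Y i x))))" if "finite B" for B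
proof (rule intb[where B="sqrt (ln (exp 1 + real (card B)))"])
  fix x
  have "(\<Sum>i\<in>B. Y i x) \<le> (\<Sum>i\<in>B. 1)" by (intro sum_mono) auto
  also have "\<dots> = real (card B)" by simp
  finally have s: "(\<Sum>i\<in>B. Y i x) \<le> real (card B)" .
  have s0: "(\<Sum>i\<in>B. Y i x) \<ge> 0" by (intro sum_nonneg) auto
  have "ln (exp 1 + (\<Sum>i\<in>B. Y i x)) \<le> ln (exp 1 + real (card B))"
    using s s0 by (subst ln_le_cancel_iff) (auto intro: add_pos_nonneg)
  moreover have "ln (exp 1 + (\<Sum>i\<in>B. Y i x)) \<ge> 0" using s0
    by (simp add: add_increasing2 one_le_exp_iff)
  ultimately show "\<bar>sqrt (ln (exp 1 + (\<Sum>i\<in>B. Y i x)))\<bar> \<le> sqrt (ln (exp 1 + real (card B)))" by simp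
qed measurable


lemma EG_lower:
  fixes k :: nat
  assumes k: "1 \<le> k" "2 * k < n" and dk: "\<delta> * real k = 1" and dn: "\<delta> * real n > 2"
  shows "expectation (\<lambda>x. sqrt (ln (exp 1 + (\<Sum>i=k+1..n. Y i x)))) \<ge> sqrt (ln (\<delta> * real n)) / 4"
proof -
  define x0 where "x0 = \<delta> * real n"
  define G where "G x = sqrt (ln (exp 1 + (\<Sum>i=k+1..n. Y i x)))" for x
  define S' where "S' x = (\<Sum>i=k+1..n. Y i x)" for x
  have d0: "\<delta> > 0"
  proof -
    have "real k > 0" using k by simp
    moreover have "0 < \<delta> * real k" using dk by simp
    ultimately show ?thesis by (auto simp: zero_less_mult_iff)
  qed
  have intG': "integrable M G" unfolding G_def by (rule intG) simp
  have S0: "S' x \<ge> 0" for x unfolding S'_def by (rule sum_nonneg) simp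
  have G1: "G x \<ge> 1" for x
  proof -
    have "exp 1 \<le> exp 1 + S' x" using S0[of x] by simp
    hence "1 \<le> ln (exp 1 + S' x)" by (subst ln_ge_iff) (use S0[of x] in \<open>auto intro: add_pos_nonneg\<close>)
    thus ?thesis by (simp add: G_def S'_def)
  qed
  show ?thesis
  proof (cases "ln x0 \<le> 16")
    case True
    have "expectation (\<lambda>x. 1) \<le> expectation G" by (rule integral_mono) (use intG' G1 in auto)
    hence "1 \<le> expectation G" by (simp add: prob_space)
    moreover have "sqrt (ln x0) \<le> 4"
      using True by (intro real_le_lsqrt) auto
    ultimately show ?thesis unfolding G_def x0_def by simp
  next
    case False
    define m where "m = n - k"
    define \<mu> where "\<mu> = \<delta> * real m"
    have x0big: "x0 \<ge> 17"
    proof -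
      have "exp 16 \<le> exp (ln x0)" using False by simp
      moreover have "x0 > 0" using dn by (simp add: x0_def)
      ultimately have "exp 16 \<le> x0" by simp
      moreover have "1 + 16 \<le> exp (16::real)" by (rule exp_ge_add_one_self)
      ultimately show ?thesis by simp
    qed
    have mu2: "\<mu> \<ge> x0 / 2"
    proof -
      have "real n \<le> 2 * real m" using k by (simp add: m_def)
      hence "\<delta> * real n \<le> \<delta> * (2 * real m)" using d0 by (intro mult_left_mono) auto
      thus ?thesis by (simp add: \<mu>_def x0_def)
    qed
    have mu8: "\<mu> \<ge> 8" using mu2 x0big by simp
    define c where "c = sqrt (ln (exp 1 + \<mu> / 2))"
    have "1 \<le> exp 1 + \<mu> / 2" using mu8 exp_ge_add_one_self[of 1] by linarith
    hence c0: "c \<ge> 0" by (simp add: c_def)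
    define Q where "Q x = (\<Sum>i=k+1..n. \<Sum>l=k+1..n. Y i x * Y l x)" for x
    define L where "L x = (8 * c / \<mu>) * S' x - (4 * c / \<mu>^2) * Q x - 3 * c" for x
    have QS: "Q x = S' x ^ 2" for x
      by (simp add: Q_def S'_def power2_eq_square sum_product)
    have GL: "L x \<le> G x" for x
    proof -
      have "L x = c * (1 - 4 * (S' x / \<mu> - 1)^2)"
        using mu8 by (simp add: L_def QS power2_eq_square field_simps)
      also have "\<dots> \<le> G x"
      proof (cases "S' x \<ge> \<mu> / 2")
        case True
        have "c \<le> G x" unfolding c_def G_def S'_def[symmetric]
          using True mu8 by (subst real_sqrt_le_iff, subst ln_le_cancel_iff) (auto intro: add_pos_nonneg)
        moreover have "c * (1 - 4 * (S' x / \<mu> - 1)^2) \<le> c" using c0 by (simp add: mult_left_le)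
        ultimately show ?thesis by linarith
      next
        case False
        have "S' x / \<mu> - 1 < - 1/2" using False mu8 by (simp add: field_simps)
        hence h: "1/2 < -(S' x / \<mu> - 1)" by linarith
        have "(1/2::real)^2 < (-(S' x / \<mu> - 1))^2" by (rule power_strict_mono[OF h]) auto
        hence "(S' x / \<mu> - 1)^2 > (1/2)^2" by (simp only: power2_minus)
        hence "(S' x / \<mu> - 1)^2 > 1/4" by (simp add: power_divide)
        hence "c * (1 - 4 * (S' x / \<mu> - 1)^2) \<le> 0" using c0 by (intro mult_nonneg_nonpos) auto
        also have "0 \<le> G x" using G1[of x] by simp
        finally show ?thesis .
      qed
      finally show ?thesis .
    qed
    have intS: "integrable M S'" unfolding S'_def by auto
    have intQ: "integrable M Q" unfolding Q_def by auto
    have intL: "integrable M L" unfolding L_def using intS intQ by auto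
    have ES: "expectation S' = \<mu>"
    proof -
      have "expectation S' = (\<Sum>i=k+1..n. expectation (Y i))" unfolding S'_def by (simp add: integral_sum)
      also have "\<dots> = (\<Sum>i=k+1..n. \<delta>)" by (rule sum.cong) (use EY k in auto)
      finally show ?thesis by (simp add: \<mu>_def m_def)
    qed
    have EQ: "expectation Q \<le> \<mu> + \<mu>^2"
    proof -
      have "expectation Q = (\<Sum>l=k+1..n. \<Sum>i=k+1..n. expectation (\<lambda>x. Y i x * Y l x))"
        unfolding Q_def by (simp add: integral_sum) (rule sum.swap)
      also have "\<dots> \<le> (\<Sum>l=k+1..n. \<delta> + real (card {k+1..n}) * \<delta>^2)"
        by (rule sum_mono, rule sum_pair_le) (use k in auto)
      also have "\<dots> = \<mu> + \<mu>^2" using k by (simp add: \<mu>_def m_def power2_eq_square algebra_simps of_nat_diff)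
      finally show ?thesis .
    qed
    have "expectation L = (8 * c / \<mu>) * \<mu> - (4 * c / \<mu>^2) * expectation Q - 3 * c"
      unfolding L_def using intS intQ ES by (simp add: prob_space)
    also have "\<dots> \<ge> (8 * c / \<mu>) * \<mu> - (4 * c / \<mu>^2) * (\<mu> + \<mu>^2) - 3 * c"
      using EQ c0 mu8 by (intro diff_right_mono diff_left_mono mult_left_mono) auto
    moreover have "(8 * c / \<mu>) * \<mu> - (4 * c / \<mu>^2) * (\<mu> + \<mu>^2) - 3 * c = c - 4 * c / \<mu>"
      using mu8 by (simp add: field_simps power2_eq_square)
    moreover have "c - 4 * c / \<mu> \<ge> c / 2"
    proof -
      have "4 * c / \<mu> \<le> 4 * c / 8" using mu8 c0 by (intro divide_left_mono) auto
      hence "4 * c / \<mu> \<le> c / 2" by simp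
      thus ?thesis by linarith
    qed
    ultimately have EL: "expectation L \<ge> c / 2" by linarith
    have "expectation L \<le> expectation G" by (rule integral_mono[OF intL intG' GL])
    moreover have "c \<ge> sqrt (ln x0) / 2"
    proof -
      have l4: "ln (4::real) \<le> 3" using ln_le_minus_one[of 4] by simp
      have "ln x0 - ln 4 = ln (x0 / 4)" using x0big by (simp add: ln_div)
      also have "\<dots> \<le> ln (exp 1 + \<mu> / 2)"
      proof -
        have "x0 / 4 \<le> exp 1 + \<mu> / 2" using mu2 exp_gt_zero[of 1] by linarith
        moreover have "x0 / 4 > 0" using x0big by simp
        ultimately show ?thesis by simp
      qed
      finally have "ln x0 / 4 \<le> ln (exp 1 + \<mu> / 2)" using l4 False by simp
      hence "sqrt (ln x0 / 4) \<le> c" unfolding c_def by simp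
      moreover have "sqrt (ln x0 / 4) = sqrt (ln x0) / 2" by (simp add: real_sqrt_divide)
      ultimately show ?thesis by simp
    qed
    ultimately show ?thesis using EL unfolding G_def x0_def by simp
  qed
qed

end

context bern begin

lemma lower:
  fixes a :: "nat \<Rightarrow> real" and k :: nat
  assumes amono: "\<And>i j. 1 \<le> i \<Longrightarrow> i \<le> j \<Longrightarrow> j \<le> n \<Longrightarrow> a j \<le> a i"
    and anon: "\<And>j. j \<in> {1..n} \<Longrightarrow> a j \<ge> 0"
    and k: "1 \<le> k" "2 * k < n" and dk: "\<delta> * real k = 1" and dn: "\<delta> * real n > 2"
  shows "\<delta> / (4 * exp 1) * sqrt (ln (\<delta> * real n)) * (\<Sum>j=1..k. a j)
     \<le> expectation (\<lambda>x. sqrt (ln (exp 1 + (\<Sum>j=1..n. Y j x))) * Max ((\<lambda>j. Y j x * a j) ` {1..n}))"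
proof -
  define T where "T x = sqrt (ln (exp 1 + (\<Sum>j=1..n. Y j x))) * Max ((\<lambda>j. Y j x * a j) ` {1..n})" for x
  define W where "W x = (\<Sum>j=1..k. a j * I j x)" for x
  define G where "G x = sqrt (ln (exp 1 + (\<Sum>i=k+1..n. Y i x)))" for x
  define A where "A = (\<Sum>j=1..k. a j)"
  have d0: "\<delta> > 0"
  proof -
    have "real k > 0" using k by simp
    moreover have "0 < \<delta> * real k" using dk by simp
    ultimately show ?thesis by (auto simp: zero_less_mult_iff)
  qed
  have k1: "k + 1 \<le> n" using k by simp
  have intT: "integrable M T" unfolding T_def by (rule upper(1)[OF amono anon k(1) k1 dk dn])
  have W0: "W x \<ge> 0" for x unfolding W_def by (rule sum_nonneg) (use anon k in auto)
  have G0: "G x \<ge> 0" for x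
  proof -
    have "0 \<le> (\<Sum>i=k+1..n. Y i x)" by (rule sum_nonneg) simp
    hence "1 \<le> exp 1 + (\<Sum>i=k+1..n. Y i x)" using exp_ge_add_one_self[of 1] by linarith
    thus ?thesis by (simp add: G_def)
  qed
  have WGT: "W x * G x \<le> T x" for x
  proof -
    have s: "(\<Sum>i=k+1..n. Y i x) \<le> (\<Sum>j=1..n. Y j x)" by (rule sum_mono2) auto
    have s0: "0 \<le> (\<Sum>i=k+1..n. Y i x)" by (rule sum_nonneg) simp
    have GS: "G x \<le> sqrt (ln (exp 1 + (\<Sum>j=1..n. Y j x)))" unfolding G_def
    proof -
      have p1: "0 < exp 1 + (\<Sum>i=k+1..n. Y i x)" using s0 exp_gt_zero[of 1] by linarith
      have p2: "0 < exp 1 + (\<Sum>j=1..n. Y j x)" using s s0 exp_gt_zero[of 1] by linarith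
      have "ln (exp 1 + (\<Sum>i=k+1..n. Y i x)) \<le> ln (exp 1 + (\<Sum>j=1..n. Y j x))"
        using p1 p2 s by simp
      thus "sqrt (ln (exp 1 + (\<Sum>i=k+1..n. Y i x))) \<le> sqrt (ln (exp 1 + (\<Sum>j=1..n. Y j x)))" by simp
    qed
    have WM: "W x \<le> Max ((\<lambda>j. Y j x * a j) ` {1..n})" unfolding W_def
      by (rule W_le_Max) (use anon k in auto)
    have "W x * G x \<le> Max ((\<lambda>j. Y j x * a j) ` {1..n}) * sqrt (ln (exp 1 + (\<Sum>j=1..n. Y j x)))"
      using W0[of x] G0[of x] WM by (intro mult_mono[OF WM GS]) auto
    thus ?thesis by (simp add: T_def mult.commute)
  qed
  have mWG: "(\<lambda>x. W x * G x) \<in> borel_measurable M" unfolding W_def G_def by measurable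
  have intWG: "integrable M (\<lambda>x. W x * G x)"
  proof (rule Bochner_Integration.integrable_bound[OF intT mWG])
    show "AE x in M. norm (W x * G x) \<le> norm (T x)"
      using WGT W0 G0 by (intro AE_I2) (smt (verit) mult_nonneg_nonneg real_norm_def)
  qed
  have "expectation (\<lambda>x. W x * G x) \<le> expectation T" by (rule integral_mono[OF intWG intT WGT])
  moreover have "expectation (\<lambda>x. W x * G x) = expectation W * expectation G"
    unfolding W_def G_def by (rule E_group) (use k in auto)
  moreover have EW: "expectation W \<ge> \<delta> * exp (-1) * A"
  proof -
    have "expectation W = (\<Sum>j=1..k. a j * expectation (I j))" unfolding W_def by (simp add: integral_sum)
    also have "\<dots> = (\<Sum>j=1..k. a j * (\<delta> * (1 - \<delta>) ^ (j - 1)))"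
      by (rule sum.cong) (use k E_I in auto)
    also have "\<dots> \<ge> (\<Sum>j=1..k. a j * (\<delta> * exp (-1)))"
    proof (rule sum_mono)
      fix j assume j: "j \<in> {1..k}"
      have "\<delta> \<le> 1" using dk k
      proof -
        have "\<delta> * 1 \<le> \<delta> * real k" using k d0 by (intro mult_left_mono) auto
        thus ?thesis using dk by simp
      qed
      have "exp (-1) \<le> (1 - \<delta>) ^ (k - 1)" by (rule pow_exp_bound[OF k(1) dk])
      also have "\<dots> \<le> (1 - \<delta>) ^ (j - 1)" using j d0 \<open>\<delta> \<le> 1\<close> by (intro power_decreasing) auto
      finally have "\<delta> * exp (-1) \<le> \<delta> * (1 - \<delta>) ^ (j - 1)" using d0 by simp
      thus "a j * (\<delta> * exp (-1)) \<le> a j * (\<delta> * (1 - \<delta>) ^ (j - 1))"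
        by (rule mult_left_mono) (use anon[of j] j k \<open>\<delta> * exp (-1) \<le> \<delta> * (1 - \<delta>) ^ (j - 1)\<close> in auto)
    qed
    also have "(\<Sum>j=1..k. a j * (\<delta> * exp (-1))) = \<delta> * exp (-1) * A"
      unfolding A_def sum_distrib_right[symmetric] by (simp add: mult.commute)
    finally show ?thesis .
  qed
  moreover have EG: "expectation G \<ge> sqrt (ln (\<delta> * real n)) / 4"
    unfolding G_def by (rule EG_lower[OF k dk dn])
  moreover have A0: "A \<ge> 0" unfolding A_def by (rule sum_nonneg) (use anon k in auto)
  moreover have "\<delta> * exp (-1) * A * (sqrt (ln (\<delta> * real n)) / 4) \<le> expectation W * expectation G"
  proof (rule mult_mono[OF EW EG])
    show "0 \<le> expectation W" using EW d0 A0 by (smt (verit) mult_nonneg_nonneg exp_ge_zero)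
    show "0 \<le> sqrt (ln (\<delta> * real n)) / 4"
    proof -
      have "1 \<le> \<delta> * real n" using dn by simp
      thus ?thesis by simp
    qed
  qed
  moreover have "\<delta> / (4 * exp 1) * sqrt (ln (\<delta> * real n)) * A = \<delta> * exp (-1) * A * (sqrt (ln (\<delta> * real n)) / 4)"
    by (simp add: exp_minus field_simps)
  ultimately show ?thesis unfolding T_def A_def by linarith
qed

end

theorem lemma5p1:
  fixes M :: "'s measure" and X :: "nat \<Rightarrow> 's \<Rightarrow> real"
    and a :: "nat \<Rightarrow> real" and n k :: nat and \<delta> :: real
  assumes "prob_space M"
    and "n \<ge> 1"
    and "\<And>j. 1 \<le> j \<Longrightarrow> j < n \<Longrightarrow> a j \<ge> a (Suc j)"
    and "a n \<ge> 0"
    and "2 / real n < \<delta>" and "\<delta> \<le> 1"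
    and "1 / \<delta> = real k"
    and "\<And>j. j \<in> {1..n} \<Longrightarrow> X j \<in> borel_measurable M"
    and "prob_space.indep_vars M (\<lambda>_. borel) X {1..n}"
    and "\<And>j. j \<in> {1..n} \<Longrightarrow> measure M {x \<in> space M. X j x = 1} = \<delta>"
    and "\<And>j. j \<in> {1..n} \<Longrightarrow> measure M {x \<in> space M. X j x = 0} = 1 - \<delta>"
  shows "\<delta> / (4 * exp 1) * sqrt (ln (\<delta> * real n)) * (\<Sum>j=1..k. a j)
           \<le> prob_space.expectation M
               (\<lambda>x. sqrt (ln (exp 1 + (\<Sum>j=1..n. X j x))) * Max ((\<lambda>j. X j x * a j) ` {1..n}))
    \<and> prob_space.expectation M
               (\<lambda>x. sqrt (ln (exp 1 + (\<Sum>j=1..n. X j x))) * Max ((\<lambda>j. X j x * a j) ` {1..n}))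
           \<le> 4 * \<delta> * sqrt (ln (\<delta> * real n)) * (\<Sum>j=1..k. a j)"
proof -
  interpret P: prob_space M by (rule assms(1))
  note Xm = assms(8)
  have n0: "real n > 0" using assms(2) by simp
  have d0: "\<delta> > 0" using assms(5) n0 by (smt (verit) divide_pos_pos)
  have dn: "\<delta> * real n > 2" using assms(5) n0 by (simp add: field_simps)
  have dk: "\<delta> * real k = 1" using assms(7) d0 by (simp add: field_simps flip: assms(7))
  have k1: "1 \<le> k"
  proof -
    have "1 \<le> 1 / \<delta>" using d0 assms(6) by (simp add: field_simps)
    thus ?thesis using assms(7) by simp
  qed
  have k2: "2 * k < n"
  proof -
    have "2 * real k * \<delta> < real n * \<delta>" using dk dn by (simp add: algebra_simps)
    hence "real (2 * k) < real n" using d0 by simp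
    thus ?thesis by linarith
  qed
  have amono: "a j \<le> a i" if "1 \<le> i" "i \<le> j" "j \<le> n" for i j
    using that(2,3)
  proof (induction j rule: dec_induct)
    case base thus ?case by simp
  next
    case (step m)
    have "a (Suc m) \<le> a m" using step that(1) by (intro assms(3)) auto
    also have "a m \<le> a i" using step by auto
    finally show ?case .
  qed
  have anon: "a j \<ge> 0" if "j \<in> {1..n}" for j
    using amono[of j n] assms(4) that by auto
  define Y where "Y j x = (if j \<in> {1..n} \<and> X j x = 1 then 1 else (0::real))" for j x
  have Ym: "Y j \<in> borel_measurable M" for j
  proof (cases "j \<in> {1..n}")
    case True
    have [measurable]: "X j \<in> borel_measurable M" using Xm[OF True] .
    have "Y j = (\<lambda>x. if X j x = 1 then 1 else 0)" using True by (auto simp: Y_def)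
    moreover have "(\<lambda>x. if X j x = 1 then 1 else (0::real)) \<in> borel_measurable M" by measurable
    ultimately show ?thesis by simp
  next
    case False
    hence "Y j = (\<lambda>x. 0)" by (auto simp: Y_def)
    thus ?thesis by simp
  qed
  have indY: "P.indep_vars (\<lambda>_. borel) Y {1..n}"
  proof -
    have "P.indep_vars (\<lambda>_. borel) (\<lambda>j x. (\<lambda>v. if v = 1 then 1 else (0::real)) (X j x)) {1..n}"
      by (rule P.indep_vars_compose2[OF assms(9)]) auto
    thus ?thesis by (rule P.indep_vars_cong[THEN iffD1, rotated -1]) (auto simp: Y_def)
  qed
  have EY: "P.expectation (Y j) = \<delta>" if j: "j \<in> {1..n}" for j
  proof -
    have [measurable]: "X j \<in> borel_measurable M" using Xm[OF j] .
    have "P.expectation (Y j) = P.expectation (indicator {x \<in> space M. X j x = 1})"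
      by (rule Bochner_Integration.integral_cong) (use j in \<open>auto simp: Y_def indicator_def\<close>)
    also have "\<dots> = measure M {x \<in> space M. X j x = 1}" by simp
    finally show ?thesis using assms(10)[OF j] by simp
  qed
  interpret B: bern M Y n \<delta>
  proof
    show "\<And>j x. Y j x = 0 \<or> Y j x = 1" by (auto simp: Y_def)
  qed (use Ym indY EY in auto)
  have AEj: "AE x in M. X j x = Y j x" if j: "j \<in> {1..n}" for j
  proof -
    have [measurable]: "X j \<in> borel_measurable M" using Xm[OF j] .
    have "P.prob ({x \<in> space M. X j x = 1} \<union> {x \<in> space M. X j x = 0}) = \<delta> + (1 - \<delta>)"
      using assms(10,11)[OF j] by (subst P.finite_measure_Union) auto
    hence "AE x in M. x \<in> {x \<in> space M. X j x = 1} \<union> {x \<in> space M. X j x = 0}"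
      by (intro P.AE_prob_1) simp
    thus ?thesis by eventually_elim (use j in \<open>auto simp: Y_def\<close>)
  qed
  have AEall: "AE x in M. \<forall>j\<in>{1..n}. X j x = Y j x"
    by (rule AE_finite_allI) (use AEj in auto)
  have mX: "(\<lambda>x. sqrt (ln (exp 1 + (\<Sum>j=1..n. X j x))) * Max ((\<lambda>j. X j x * a j) ` {1..n})) \<in> borel_measurable M"
  proof -
    have s: "(\<lambda>x. \<Sum>j=1..n. X j x) \<in> borel_measurable M"
      by (rule borel_measurable_sum) (use Xm in auto)
    have m: "(\<lambda>x. Max ((\<lambda>j. X j x * a j) ` {1..n})) \<in> borel_measurable M"
      by (rule borel_measurable_Max) (use Xm in auto)
    show ?thesis using s m by measurable
  qed
  have mY: "(\<lambda>x. sqrt (ln (exp 1 + (\<Sum>j=1..n. Y j x))) * Max ((\<lambda>j. Y j x * a j) ` {1..n})) \<in> borel_measurable M"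
    using Ym by measurable
  have eq: "P.expectation (\<lambda>x. sqrt (ln (exp 1 + (\<Sum>j=1..n. X j x))) * Max ((\<lambda>j. X j x * a j) ` {1..n}))
      = P.expectation (\<lambda>x. sqrt (ln (exp 1 + (\<Sum>j=1..n. Y j x))) * Max ((\<lambda>j. Y j x * a j) ` {1..n}))"
  proof (rule integral_cong_AE[OF mX mY])
    show "AE x in M. sqrt (ln (exp 1 + (\<Sum>j=1..n. X j x))) * Max ((\<lambda>j. X j x * a j) ` {1..n})
        = sqrt (ln (exp 1 + (\<Sum>j=1..n. Y j x))) * Max ((\<lambda>j. Y j x * a j) ` {1..n})"
      using AEall
    proof eventually_elim
      case (elim x)
      have "(\<Sum>j=1..n. X j x) = (\<Sum>j=1..n. Y j x)" by (rule sum.cong) (use elim in auto)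
      moreover have "(\<lambda>j. X j x * a j) ` {1..n} = (\<lambda>j. Y j x * a j) ` {1..n}"
        by (rule image_cong) (use elim in auto)
      ultimately show ?case by simp
    qed
  qed
  have L: "\<delta> / (4 * exp 1) * sqrt (ln (\<delta> * real n)) * (\<Sum>j=1..k. a j)
     \<le> P.expectation (\<lambda>x. sqrt (ln (exp 1 + (\<Sum>j=1..n. Y j x))) * Max ((\<lambda>j. Y j x * a j) ` {1..n}))"
    by (rule B.lower[OF amono anon k1 k2 dk dn]) auto
  have U: "P.expectation (\<lambda>x. sqrt (ln (exp 1 + (\<Sum>j=1..n. Y j x))) * Max ((\<lambda>j. Y j x * a j) ` {1..n}))
     \<le> 4 * \<delta> * sqrt (ln (\<delta> * real n)) * (\<Sum>j=1..k. a j)"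
    by (rule B.upper(2)[OF amono anon k1 _ dk dn]) (use k2 in auto)
  show ?thesis unfolding eq using L U by simp
qed

end
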